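(* Let $A:\mathbb{R}\to M_{n\times n}(\mathbb{R})$, $K:\mathbb{R}\to M_{n\times m}(\mathbb{R})$, $C:\mathbb{R}\to M_{m\times n}(\mathbb{R})$ be continuous. Suppose $\dot x=A(t)x$ has non-uniform bounded growth with constants $K_0>0$, $a>0$, $\varepsilon>0$, and that there exist $\mathcal{K},\mathcal{C}>0$, $\delta>0$, $\gamma\ge0$ with $\|K(z)\|\le\mathcal{K}e^{-\delta|z|}$ and $\|C(z)\|\le\mathcal{C}e^{\gamma|z|}$ for all $z\in\mathbb{R}$, and $\delta>\gamma+\varepsilon$. Then the system $\dot x=A(t)x,\ y=C(t)x$ is non-uniformly completely observable (NUCO) if and only if the system $\dot x=(A(t)-K(t)C(t))x,\ y=C(t)x$ is NUCO.
   Context: For a continuous $V:\mathbb{R}\to M_{n\times n}(\mathbb{R})$, $\Phi_V(t,s)$ is the transition matrix of $\dot x=V(t)x$. Non-uniform bounded growth with constants $K_0>0,a>0,\eta>0$: $\|\Phi_V(t,\tau)\|\le K_0e^{\eta|\tau|}e^{a|t-\tau|}$ for all $t,\tau\in\mathbb{R}$. For the pair $(V,C)$ define the observability Gramians $M_V(a,b)=\int_a^b\Phi_V^T(s,a)C^T(s)C(s)\Phi_V(s,a)\,ds$ and $N_V(a,b)=\int_a^b\Phi_V^T(s,b)C^T(s)C(s)\Phi_V(s,b)\,ds$. The system $\dot x=V(t)x,\ y=C(t)x$ is non-uniformly completely observable (NUCO) on $\mathbb{R}$ if there exist constants $\nu_0,\nu_1,\bar\nu_0,\bar\nu_1\ge0$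 and functions $\vartheta_0,\varrho_0,\vartheta_1,\varrho_1:[0,\infty)\to(0,\infty)$ such that for every $t\in\mathbb{R}$ there is $\sigma_0(t)>0$ with $e^{-2\nu_0|t|}\vartheta_0(\sigma)I\le M_V(t,t+\sigma)\le e^{2\nu_1|t|}\vartheta_1(\sigma)I$ and $e^{-2\bar\nu_0|t|}\varrho_0(\sigma)I\le N_V(t,t+\sigma)\le e^{2\bar\nu_1|t|}\varrho_1(\sigma)I$ for every $\sigma\ge\sigma_0(t)$. Matrix inequalities are in the sense of the Loewner order on symmetric matrices. *)

theory Defs
  imports "HOL-Analysis.Analysis"
begin

definition mnorm :: "real^'n^'m \<Rightarrow> real" where
  "mnorm M = onorm (\<lambda>x. M *v x)"

definition is_transition :: "(real \<Rightarrow> real^'n^'n) \<Rightarrow> (real \<Rightarrow> real \<Rightarrow> real^'n^'n) \<Rightarrow> bool" where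
  "is_transition V Phi \<longleftrightarrow>
     (\<forall>s. Phi s s = mat 1 \<and>
       (\<forall>t. ((\<lambda>r. Phi r s) has_vector_derivative (V t ** Phi t s)) (at t)))"

text \<open>The transition matrix (unique for continuous V).\<close>
definition transition :: "(real \<Rightarrow> real^'n^'n) \<Rightarrow> real \<Rightarrow> real \<Rightarrow> real^'n^'n" where
  "transition V = (THE Phi. is_transition V Phi)"

definition nonuniform_bounded_growth :: "(real \<Rightarrow> real^'n^'n) \<Rightarrow> real \<Rightarrow> real \<Rightarrow> real \<Rightarrow> bool" where
  "nonuniform_bounded_growth V K0 a \<eta> \<longleftrightarrow>
     (\<forall>t \<tau>. mnorm (transition V t \<tau>) \<le> K0 * exp (\<eta> * \<bar>\<tau>\<bar>) * exp (a * \<bar>t - \<tau>\<bar>))"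

definition loewner_le :: "real^'n^'n \<Rightarrow> real^'n^'n \<Rightarrow> bool" where
  "loewner_le P Q \<longleftrightarrow> (\<forall>x. x \<bullet> (P *v x) \<le> x \<bullet> (Q *v x))"

definition gram_M :: "(real \<Rightarrow> real^'n^'n) \<Rightarrow> (real \<Rightarrow> real^'n^'m) \<Rightarrow> real \<Rightarrow> real \<Rightarrow> real^'n^'n" where
  "gram_M V C a b = integral {a..b}
     (\<lambda>s. transpose (transition V s a) ** transpose (C s) ** C s ** transition V s a)"

definition gram_N :: "(real \<Rightarrow> real^'n^'n) \<Rightarrow> (real \<Rightarrow> real^'n^'m) \<Rightarrow> real \<Rightarrow> real \<Rightarrow> real^'n^'n" where
  "gram_N V C a b = integral {a..b}
     (\<lambda>s. transpose (transition V s b) ** transpose (C s) ** C s ** transition V s b)"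

definition NUCO :: "(real \<Rightarrow> real^'n^'n) \<Rightarrow> (real \<Rightarrow> real^'n^'m) \<Rightarrow> bool" where
  "NUCO V C \<longleftrightarrow>
    (\<exists>\<nu>0 \<nu>1 \<nu>0' \<nu>1' (\<theta>0::real\<Rightarrow>real) (\<rho>0::real\<Rightarrow>real) (\<theta>1::real\<Rightarrow>real) (\<rho>1::real\<Rightarrow>real).
       \<nu>0 \<ge> 0 \<and> \<nu>1 \<ge> 0 \<and> \<nu>0' \<ge> 0 \<and> \<nu>1' \<ge> 0 \<and>
       (\<forall>\<sigma>\<ge>0. \<theta>0 \<sigma> > 0 \<and> \<rho>0 \<sigma> > 0 \<and> \<theta>1 \<sigma> > 0 \<and> \<rho>1 \<sigma> > 0) \<and>
       (\<forall>t. \<exists>\<sigma>0>0. \<forall>\<sigma>\<ge>\<sigma>0.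
          loewner_le ((exp (-2 * \<nu>0 * \<bar>t\<bar>) * \<theta>0 \<sigma>) *\<^sub>R mat 1) (gram_M V C t (t + \<sigma>)) \<and>
          loewner_le (gram_M V C t (t + \<sigma>)) ((exp (2 * \<nu>1 * \<bar>t\<bar>) * \<theta>1 \<sigma>) *\<^sub>R mat 1) \<and>
          loewner_le ((exp (-2 * \<nu>0' * \<bar>t\<bar>) * \<rho>0 \<sigma>) *\<^sub>R mat 1) (gram_N V C t (t + \<sigma>)) \<and>
          loewner_le (gram_N V C t (t + \<sigma>)) ((exp (2 * \<nu>1' * \<bar>t\<bar>) * \<rho>1 \<sigma>) *\<^sub>R mat 1)))"

end

theory Submission
  imports Defs
begin



lemma mm_add_rdistrib: "((A::real^'n^'m) + B) ** (C::real^'k^'n) = A ** C + B ** C"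
  by (vector matrix_matrix_mult_def sum.distrib distrib_right)
lemma mm_scaleR_left: "((c::real) *\<^sub>R (A::real^'n^'m)) ** (C::real^'k^'n) = c *\<^sub>R (A ** C)"
  by (vector matrix_matrix_mult_def sum_distrib_left mult.assoc)
lemma mm_scaleR_right: "(A::real^'n^'m) ** ((c::real) *\<^sub>R (C::real^'k^'n)) = c *\<^sub>R (A ** C)"
  by (vector matrix_matrix_mult_def sum_distrib_left algebra_simps)

lemma bilinear_mmult: "bilinear (\<lambda>(A::real^'n^'m) (B::real^'k^'n). A ** B)"
  unfolding bilinear_def
  by (auto intro!: linearI simp: matrix_add_ldistrib mm_add_rdistrib mm_scaleR_left mm_scaleR_right)

lemma bb_mmult: "bounded_bilinear (\<lambda>(A::real^'n^'m) (B::real^'k^'n). A ** B)"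
  using bilinear_mmult bilinear_conv_bounded_bilinear by blast

lemma bb_mvmult: "bounded_bilinear (\<lambda>(A::real^'n^'m) (x::real^'n). A *v x)"
  unfolding bilinear_conv_bounded_bilinear[symmetric] bilinear_def
  by (auto intro!: linearI simp: matrix_vector_right_distrib matrix_vector_mult_add_rdistrib matrix_vector_mult_scaleR scaleR_matrix_vector_assoc)




definition sint :: "(real \<Rightarrow> 'a::banach) \<Rightarrow> real \<Rightarrow> real \<Rightarrow> 'a" where
  "sint f s t = (if s \<le> t then integral {s..t} f else - integral {t..s} f)"

lemma sint_self[simp]: "sint f s s = 0"
  by (simp add: sint_def)

lemma sint_base:
  fixes f :: "real \<Rightarrow> 'a::banach"
  assumes f: "continuous_on UNIV f" and "b \<le> s" "b \<le> t"
  shows "sint f s t = integral {b..t} f - integral {b..s} f"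
proof -
  have i: "f integrable_on {x..y}" for x y
    by (rule integrable_continuous_real) (rule continuous_on_subset[OF f], auto)
  show ?thesis
  proof (cases "s \<le> t")
    case True
    then show ?thesis using Henstock_Kurzweil_Integration.integral_combine[OF \<open>b \<le> s\<close> True i[of b t]]
      by (simp add: sint_def algebra_simps)
  next
    case False
    then show ?thesis using Henstock_Kurzweil_Integration.integral_combine[OF \<open>b \<le> t\<close> _ i[of b s]] 
      by (simp add: sint_def algebra_simps)
  qed
qed

lemma sint_deriv:
  fixes f :: "real \<Rightarrow> 'a::banach"
  assumes f: "continuous_on UNIV f"
  shows "((\<lambda>u. sint f s u) has_vector_derivative f t) (at t)"
proof -
  define b where "b = min s t - 1"
  have "((\<lambda>u. integral {b..u} f) has_vector_derivative f t) (at t within {b..t+1})"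
    by (rule integral_has_vector_derivative) (auto intro: continuous_on_subset[OF f] simp: b_def)
  moreover have "at t within {b..t+1} = at t"
    by (rule at_within_interior) (auto simp: b_def)
  ultimately have "((\<lambda>u. integral {b..u} f) has_vector_derivative f t) (at t)" by simp
  then have "((\<lambda>u. integral {b..u} f - integral {b..s} f) has_vector_derivative f t) (at t)"
    by (simp add: has_vector_derivative_diff_const)
  then show ?thesis
    by (rule has_vector_derivative_transform_within_open[where S="{b<..}"])
       (auto simp: b_def intro!: sint_base[OF f, symmetric])
qed

lemma sint_deriv_within:
  fixes f :: "real \<Rightarrow> 'a::banach"
  assumes f: "continuous_on UNIV f"
  shows "((\<lambda>u. sint f s u) has_vector_derivative f t) (at t within S)"
  using sint_deriv[OF f] has_vector_derivative_at_within by blast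

lemma sint_unique:
  fixes h :: "real \<Rightarrow> 'a::banach"
  assumes H: "\<And>t. (H has_vector_derivative h t) (at t)" and h: "continuous_on UNIV h"
    and "H s = 0"
  shows "sint h s t = H t"
proof -
  have D: "\<And>x. x \<in> UNIV \<Longrightarrow> ((\<lambda>u. H u - sint h s u) has_vector_derivative 0) (at x within UNIV)"
    using H sint_deriv[OF h] by (metis (no_types) diff_self has_vector_derivative_diff)
  obtain c where c: "\<And>x. x \<in> UNIV \<Longrightarrow> H x - sint h s x = c"
    by (rule has_vector_derivative_zero_constant[of UNIV "\<lambda>u. H u - sint h s u"]) (use D in auto)
  from c[of s] c[of t] \<open>H s = 0\<close> show ?thesis by simp
qed

lemma sint_ftc:
  fixes h :: "real \<Rightarrow> 'a::banach"
  assumes H: "\<And>t. (H has_vector_derivative h t) (at t)" and h: "continuous_on UNIV h"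
  shows "H t - H s = sint h s t"
  using sint_unique[of "\<lambda>u. H u - H s" h s t] H h
  by (simp add: has_vector_derivative_diff_const)

lemma sint_linear:
  fixes f :: "real \<Rightarrow> 'a::banach" and L :: "'a \<Rightarrow> 'b::banach"
  assumes L: "bounded_linear L" and f: "continuous_on UNIV f"
  shows "sint (\<lambda>r. L (f r)) s t = L (sint f s t)"
proof (rule sint_unique)
  show "((\<lambda>t. L (sint f s t)) has_vector_derivative L (f t)) (at t)" for t
    using bounded_linear.has_vector_derivative[OF L sint_deriv[OF f]] .
  show "continuous_on UNIV (\<lambda>r. L (f r))"
    using bounded_linear.continuous_on[OF L f] .
  show "L (sint f s s) = 0" using L by (simp add: linear_simps)
qed

lemma sint_add:
  fixes f g :: "real \<Rightarrow> 'a::banach"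
  assumes f: "continuous_on UNIV f" and g: "continuous_on UNIV g"
  shows "sint (\<lambda>r. f r + g r) s t = sint f s t + sint g s t"
proof (rule sint_unique)
  show "((\<lambda>t. sint f s t + sint g s t) has_vector_derivative f t + g t) (at t)" for t
    by (intro has_vector_derivative_add sint_deriv f g)
  show "continuous_on UNIV (\<lambda>r. f r + g r)" using f g by (intro continuous_intros)
qed simp

lemma sint_diff:
  fixes f g :: "real \<Rightarrow> 'a::banach"
  assumes f: "continuous_on UNIV f" and g: "continuous_on UNIV g"
  shows "sint (\<lambda>r. f r - g r) s t = sint f s t - sint g s t"
proof (rule sint_unique)
  show "((\<lambda>t. sint f s t - sint g s t) has_vector_derivative f t - g t) (at t)" for t
    by (intro has_vector_derivative_diff sint_deriv f g)
  show "continuous_on UNIV (\<lambda>r. f r - g r)" using f g by (intro continuous_intros)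
qed simp

lemma sint_sum:
  fixes f :: "nat \<Rightarrow> real \<Rightarrow> 'a::banach"
  assumes f: "\<And>i. continuous_on UNIV (f i)"
  shows "sint (\<lambda>r. \<Sum>i<n. f i r) s t = (\<Sum>i<n. sint (f i) s t)"
proof (rule sint_unique)
  show "((\<lambda>t. \<Sum>i<n. sint (f i) s t) has_vector_derivative (\<Sum>i<n. f i t)) (at t)" for t
    by (intro has_vector_derivative_sum sint_deriv f)
  show "continuous_on UNIV (\<lambda>r. \<Sum>i<n. f i r)" using f by (intro continuous_intros)
qed simp

lemma sint_cong:
  fixes f g :: "real \<Rightarrow> 'a::banach"
  assumes "\<And>r. r \<in> {min s t..max s t} \<Longrightarrow> f r = g r"
  shows "sint f s t = sint g s t"
  using assms by (auto simp: sint_def intro!: integral_cong)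

lemma sint_norm_bound:
  fixes f :: "real \<Rightarrow> 'a::banach"
  assumes f: "continuous_on UNIV f" and g: "continuous_on UNIV g"
    and b: "\<And>r. r \<in> {min s t..max s t} \<Longrightarrow> norm (f r) \<le> g r"
  shows "norm (sint f s t) \<le> \<bar>sint g s t\<bar>"
proof -
  have i: "h integrable_on {x..y}" if "continuous_on UNIV h" for x y and h :: "real \<Rightarrow> 'b::banach"
    by (rule integrable_continuous_real) (rule continuous_on_subset[OF that], auto)
  show ?thesis
  proof (cases "s \<le> t")
    case True
    then have "norm (integral {s..t} f) \<le> integral {s..t} g"
      using b by (intro integral_norm_bound_integral i f g) auto
    then show ?thesis using True by (simp add: sint_def)
  next
    case False
    then have "norm (integral {t..s} f) \<le> integral {t..s} g"
      using b by (intro integral_norm_bound_integral i f g) auto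
    then show ?thesis using False by (simp add: sint_def)
  qed
qed

lemma sint_nonneg:
  fixes g :: "real \<Rightarrow> real"
  assumes g: "continuous_on UNIV g" and "s \<le> t" and "\<And>r. r \<in> {s..t} \<Longrightarrow> 0 \<le> g r"
  shows "0 \<le> sint g s t"
proof -
  have "0 \<le> integral {s..t} g"
    by (rule Henstock_Kurzweil_Integration.integral_nonneg) (auto intro!: integrable_continuous_real continuous_on_subset[OF g] assms(3))
  then show ?thesis using assms(2) by (simp add: sint_def)
qed

lemma sint_mono:
  assumes f: "continuous_on UNIV f" and g: "continuous_on UNIV g" and "s \<le> t"
    and "\<And>r. r \<in> {s..t} \<Longrightarrow> f r \<le> (g r::real)"
  shows "sint f s t \<le> sint g s t"
  using assms by (auto simp: sint_def intro!: Henstock_Kurzweil_Integration.integral_le integrable_continuous_real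
      intro: continuous_on_subset[OF g] continuous_on_subset[OF f])

lemma sint_swap:
  "sint f s t = - sint f t s"
  by (auto simp: sint_def)




lemma sint_uniform_limit:
  fixes fn :: "nat \<Rightarrow> real \<Rightarrow> 'a::banach"
  assumes u: "uniform_limit {min s t..max s t} fn f sequentially"
    and c: "\<And>n. continuous_on UNIV (fn n)"
  shows "(\<lambda>n. sint (fn n) s t) \<longlonglongrightarrow> sint f s t"
proof -
  have c': "\<And>n. continuous_on {min s t..max s t} (fn n)"
    using c continuous_on_subset by blast
  obtain I J where I: "\<And>n. (fn n has_integral I n) {min s t..max s t}"
    and J: "(f has_integral J) {min s t..max s t}" and IJ: "I \<longlonglongrightarrow> J"
    by (rule uniform_limit_integral[OF u c']) auto
  have eqI: "integral {min s t..max s t} (fn n) = I n" for n using I integral_unique by blast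
  have eqJ: "integral {min s t..max s t} f = J" using J integral_unique by blast
  show ?thesis
  proof (cases "s \<le> t")
    case True
    then show ?thesis using IJ eqI eqJ by (simp add: sint_def)
  next
    case False
    then show ?thesis using tendsto_minus[OF IJ] eqI eqJ by (simp add: sint_def)
  qed
qed

lemma sint_pow_abs:
  fixes c :: real
  assumes "c \<ge> 0"
  shows "\<bar>sint (\<lambda>r. c * \<bar>r - s\<bar>^k) s t\<bar> = c * \<bar>t - s\<bar>^(Suc k) / real (Suc k)"
proof (cases "s \<le> t")
  case True
  have "sint (\<lambda>r. c * \<bar>r - s\<bar>^k) s t = sint (\<lambda>r. c * (r - s)^k) s t"
    using True by (intro sint_cong) auto
  also have "\<dots> = c * (t - s)^(Suc k) / real (Suc k)"
  proof (rule sint_unique[where H="\<lambda>u. c * (u - s)^(Suc k) / real (Suc k)"])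
    show "((\<lambda>u. c * (u - s) ^ Suc k / real (Suc k)) has_vector_derivative c * (t - s) ^ k) (at t)" for t
    proof -
      have "((\<lambda>u. (u - s) ^ Suc k) has_real_derivative real (Suc k) * (1 * (t - s) ^ (Suc k - Suc 0))) (at t)"
        by (intro DERIV_power derivative_eq_intros) auto
      then have "((\<lambda>u. c * (u - s) ^ Suc k / real (Suc k)) has_real_derivative c * (real (Suc k) * (1 * (t - s) ^ (Suc k - Suc 0))) / real (Suc k)) (at t)"
        by (intro DERIV_cdivide DERIV_cmult)
      then show ?thesis by (simp add: has_real_derivative_iff_has_vector_derivative)
    qed
    show "continuous_on UNIV (\<lambda>r. c * (r - s) ^ k)" by (intro continuous_intros)
  qed simp
  finally show ?thesis using True assms by simp
next
  case False
  have "sint (\<lambda>r. c * \<bar>r - s\<bar>^k) s t = sint (\<lambda>r. c * (s - r)^k) s t"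
    using False by (intro sint_cong) auto
  also have "\<dots> = - c * (s - t)^(Suc k) / real (Suc k)"
  proof (rule sint_unique[where H="\<lambda>u. - c * (s - u)^(Suc k) / real (Suc k)"])
    show "((\<lambda>u. - c * (s - u) ^ Suc k / real (Suc k)) has_vector_derivative c * (s - t) ^ k) (at t)" for t
    proof -
      have "((\<lambda>u. (s - u) ^ Suc k) has_real_derivative real (Suc k) * (-1 * (s - t) ^ (Suc k - Suc 0))) (at t)"
        by (intro DERIV_power derivative_eq_intros) auto
      then have "((\<lambda>u. - c * (s - u) ^ Suc k / real (Suc k)) has_real_derivative - c * (real (Suc k) * (-1 * (s - t) ^ (Suc k - Suc 0))) / real (Suc k)) (at t)"
        by (intro DERIV_cdivide DERIV_cmult)
      then show ?thesis by (simp add: has_real_derivative_iff_has_vector_derivative)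
    qed
    show "continuous_on UNIV (\<lambda>r. c * (s - r) ^ k)" by (intro continuous_intros)
  qed simp
  finally show ?thesis using False assms by (simp add: abs_minus_commute)
qed

primrec picard :: "(real \<Rightarrow> real^'n^'n) \<Rightarrow> real \<Rightarrow> nat \<Rightarrow> real \<Rightarrow> real^'n^'n" where
  "picard V s 0 = (\<lambda>t. mat 1)"
| "picard V s (Suc k) = (\<lambda>t. sint (\<lambda>r. V r ** picard V s k r) s t)"

lemma picard_cont:
  assumes V: "continuous_on UNIV V"
  shows "continuous_on UNIV (picard V s k)"
proof (induction k)
  case 0
  then show ?case by simp
next
  case (Suc k)
  have c: "continuous_on UNIV (\<lambda>r. V r ** picard V s k r)"
    by (rule bounded_bilinear.continuous_on[OF bb_mmult V Suc])
  show ?case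
    unfolding picard.simps
    by (rule continuous_at_imp_continuous_on)
       (auto intro!: has_vector_derivative_continuous sint_deriv[OF c])
qed

lemma mm_bound: obtains B :: real where "B > 0" "\<And>(X::real^'n^'m) (Y::real^'k^'n). norm (X ** Y) \<le> norm X * norm Y * B"
  using bounded_bilinear.pos_bounded[OF bb_mmult] by blast

lemma picard_bound:
  fixes V :: "real \<Rightarrow> real^'n^'n"
  assumes V: "continuous_on UNIV V" and B: "B > 0" "\<And>(X::real^'n^'n) (Y::real^'n^'n). norm (X ** Y) \<le> norm X * norm Y * B"
    and M: "M \<ge> 0" "\<And>r. r \<in> {s-T..s+T} \<Longrightarrow> norm (V r) \<le> M"
  shows "t \<in> {s-T..s+T} \<Longrightarrow> norm (picard V s k t) \<le> norm (mat 1 :: real^'n^'n) * (B * M * \<bar>t - s\<bar>)^k / fact k"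
proof (induction k arbitrary: t)
  case 0
  then show ?case by simp
next
  case (Suc k)
  let ?N = "norm (mat 1 :: real^'n^'n)"
  let ?c = "?N * (B * M)^(Suc k) / fact k"
  have c: "continuous_on UNIV (\<lambda>r. V r ** picard V s k r)"
    by (rule bounded_bilinear.continuous_on[OF bb_mmult V picard_cont[OF V]])
  have "norm (picard V s (Suc k) t) \<le> \<bar>sint (\<lambda>r. ?c * \<bar>r - s\<bar>^k) s t\<bar>"
    unfolding picard.simps
  proof (rule sint_norm_bound[OF c])
    show "continuous_on UNIV (\<lambda>r. ?c * \<bar>r - s\<bar> ^ k)" by (intro continuous_intros)
    fix r assume r: "r \<in> {min s t..max s t}"
    then have rT: "r \<in> {s-T..s+T}" using Suc.prems by auto
    have "norm (V r ** picard V s k r) \<le> norm (V r) * norm (picard V s k r) * B" by (rule B)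
    also have "\<dots> \<le> M * (?N * (B * M * \<bar>r - s\<bar>)^k / fact k) * B"
      using M(2)[OF rT] Suc.IH[OF rT] B(1) M(1)
      by (intro mult_right_mono mult_mono) auto
    also have "\<dots> = ?c * \<bar>r - s\<bar>^k"
      by (simp add: power_mult_distrib field_simps)
    finally show "norm (V r ** picard V s k r) \<le> ?c * \<bar>r - s\<bar>^k" .
  qed
  also have "\<dots> = ?c * \<bar>t - s\<bar>^(Suc k) / real (Suc k)"
    using B M by (intro sint_pow_abs) auto
  also have "\<dots> = ?N * (B * M * \<bar>t - s\<bar>)^(Suc k) / fact (Suc k)"
    by (simp add: power_mult_distrib field_simps)
  finally show ?case .
qed




definition solphi :: "(real \<Rightarrow> real^'n^'n) \<Rightarrow> real \<Rightarrow> real \<Rightarrow> real^'n^'n" where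
  "solphi V s t = (\<Sum>k. picard V s k t)"

lemma cont_bounded_on_ivl:
  fixes f :: "real \<Rightarrow> 'a::real_normed_vector"
  assumes "continuous_on UNIV f"
  shows "bounded (f ` {a..b})"
  by (rule compact_imp_bounded, rule compact_continuous_image)
     (auto intro: continuous_on_subset[OF assms])

lemma picard_unif:
  fixes V :: "real \<Rightarrow> real^'n^'n"
  assumes V: "continuous_on UNIV V" and T: "T \<ge> 0"
  shows "uniform_limit {s-T..s+T} (\<lambda>n t. \<Sum>k<n. picard V s k t) (solphi V s) sequentially"
proof -
  obtain B :: real where B: "B > 0" "\<And>(X::real^'n^'n) (Y::real^'n^'n). norm (X ** Y) \<le> norm X * norm Y * B"
    by (rule mm_bound) blast
  obtain M where M: "M > 0" "\<And>r. r \<in> {s-T..s+T} \<Longrightarrow> norm (V r) \<le> M"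
    using cont_bounded_on_ivl[OF V, of "s-T" "s+T"] unfolding bounded_pos by auto
  let ?N = "norm (mat 1 :: real^'n^'n)"
  have "uniform_limit {s-T..s+T} (\<lambda>n t. \<Sum>k<n. picard V s k t) (\<lambda>t. suminf (\<lambda>k. picard V s k t)) sequentially"
  proof (rule Weierstrass_m_test)
    fix k t assume t: "t \<in> {s-T..s+T}"
    have "norm (picard V s k t) \<le> ?N * (B * M * \<bar>t - s\<bar>)^k / fact k"
      by (rule picard_bound[OF V B(1) B(2) _ M(2) t]) (use M in auto)
    also have "\<dots> \<le> ?N * (B * M * T)^k / fact k"
      using t B M by (intro divide_right_mono mult_left_mono power_mono mult_left_mono) auto
    finally show "norm (picard V s k t) \<le> ?N * (B * M * T)^k / fact k" .
  next
    have "summable (\<lambda>k. (B * M * T)^k /\<^sub>R fact k)" by (rule summable_exp_generic)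
    then have "summable (\<lambda>k. ?N * ((B * M * T)^k /\<^sub>R fact k))" by (rule summable_mult)
    then show "summable (\<lambda>k. ?N * (B * M * T)^k / fact k)" by (simp add: divide_inverse ac_simps)
  qed
  then show ?thesis unfolding solphi_def[abs_def] by simp
qed

lemma solphi_cont:
  fixes V :: "real \<Rightarrow> real^'n^'n"
  assumes V: "continuous_on UNIV V"
  shows "continuous_on UNIV (solphi V s)"
proof (rule continuous_at_imp_continuous_on, rule ballI)
  fix t :: real
  let ?T = "\<bar>t - s\<bar> + 1"
  have "continuous_on {s-?T..s+?T} (solphi V s)"
    by (rule uniform_limit_theorem[OF _ picard_unif[OF V]])
       (auto intro!: always_eventually continuous_on_sum intro: continuous_on_subset[OF picard_cont[OF V]])
  then show "isCont (solphi V s) t"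
    by (rule continuous_on_interior) auto
qed

lemma solphi_eq:
  fixes V :: "real \<Rightarrow> real^'n^'n"
  assumes V: "continuous_on UNIV V"
  shows "solphi V s t = mat 1 + sint (\<lambda>r. V r ** solphi V s r) s t"
proof -
  define T where "T = \<bar>t - s\<bar>"
  define S where "S n r = (\<Sum>k<n. picard V s k r)" for n r
  have U: "uniform_limit {s-T..s+T} S (solphi V s) sequentially"
    unfolding S_def[abs_def] by (rule picard_unif[OF V]) (simp add: T_def)
  have Sc: "continuous_on UNIV (S n)" for n
    unfolding S_def[abs_def] by (intro continuous_on_sum picard_cont[OF V])
  have cVS: "continuous_on UNIV (\<lambda>r. V r ** S n r)" for n
    by (rule bounded_bilinear.continuous_on[OF bb_mmult V Sc])
  have cVP: "continuous_on UNIV (\<lambda>r. V r ** picard V s k r)" for k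
    by (rule bounded_bilinear.continuous_on[OF bb_mmult V picard_cont[OF V]])
  have eq1: "S (Suc n) t = mat 1 + sint (\<lambda>r. V r ** S n r) s t" for n
  proof -
    have "S (Suc n) t = mat 1 + (\<Sum>k<n. picard V s (Suc k) t)"
      unfolding S_def by (subst sum.lessThan_Suc_shift) simp
    also have "(\<Sum>k<n. picard V s (Suc k) t) = sint (\<lambda>r. \<Sum>k<n. V r ** picard V s k r) s t"
      by (simp add: sint_sum[OF cVP])
    also have "(\<lambda>r. \<Sum>k<n. V r ** picard V s k r) = (\<lambda>r. V r ** S n r)"
      unfolding S_def by (simp add: bounded_bilinear.sum_right[OF bb_mmult])
    finally show ?thesis .
  qed
  have tT: "t \<in> {s-T..s+T}" by (auto simp: T_def)
  have lim1: "(\<lambda>n. S (Suc n) t) \<longlonglongrightarrow> solphi V s t"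
    using tendsto_uniform_limitI[OF U tT] by (rule LIMSEQ_Suc)
  have sub: "{min s t..max s t} \<subseteq> {s-T..s+T}" by (auto simp: T_def)
  have U2: "uniform_limit {min s t..max s t} (\<lambda>n r. V r ** S n r) (\<lambda>r. V r ** solphi V s r) sequentially"
  proof (rule uniform_limit_on_subset[OF _ sub])
    show "uniform_limit {s-T..s+T} (\<lambda>n r. V r ** S n r) (\<lambda>r. V r ** solphi V s r) sequentially"
      by (rule bounded_bilinear.bounded_uniform_limit[OF bb_mmult uniform_limit_const U
            cont_bounded_on_ivl[OF solphi_cont[OF V]] cont_bounded_on_ivl[OF V]])
  qed
  have lim2: "(\<lambda>n. sint (\<lambda>r. V r ** S n r) s t) \<longlonglongrightarrow> sint (\<lambda>r. V r ** solphi V s r) s t"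
    by (rule sint_uniform_limit[OF U2 cVS])
  have "(\<lambda>n. S (Suc n) t) \<longlonglongrightarrow> mat 1 + sint (\<lambda>r. V r ** solphi V s r) s t"
    unfolding eq1 by (intro tendsto_add tendsto_const lim2)
  with lim1 show ?thesis using LIMSEQ_unique by blast
qed

lemma solphi_deriv:
  fixes V :: "real \<Rightarrow> real^'n^'n"
  assumes V: "continuous_on UNIV V"
  shows "(solphi V s has_vector_derivative V t ** solphi V s t) (at t)"
proof -
  have c: "continuous_on UNIV (\<lambda>r. V r ** solphi V s r)"
    by (rule bounded_bilinear.continuous_on[OF bb_mmult V solphi_cont[OF V]])
  have e: "solphi V s = (\<lambda>t. mat 1 + sint (\<lambda>r. V r ** solphi V s r) s t)"
    using solphi_eq[OF V] by (rule ext)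
  have "((\<lambda>t. mat 1 + sint (\<lambda>r. V r ** solphi V s r) s t) has_vector_derivative 0 + V t ** solphi V s t) (at t)"
    by (intro has_vector_derivative_add has_vector_derivative_const sint_deriv[OF c])
  then show ?thesis by (subst e) simp
qed

lemma transition_exists:
  fixes V :: "real \<Rightarrow> real^'n^'n"
  assumes V: "continuous_on UNIV V"
  shows "is_transition V (\<lambda>t s. solphi V s t)"
  unfolding is_transition_def
proof (intro allI conjI)
  fix s t
  show "solphi V s s = mat 1" using solphi_eq[OF V, of s s] by simp
  show "((\<lambda>r. solphi V s r) has_vector_derivative V t ** solphi V s t) (at t)"
    by (rule solphi_deriv[OF V])
qed




lemma transpose_add': "transpose ((A::real^'n^'m) + B) = transpose A + transpose B"
  by (simp add: transpose_def vec_eq_iff)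
lemma transpose_scaleR': "transpose ((c::real) *\<^sub>R (A::real^'n^'m)) = c *\<^sub>R transpose A"
  by (simp add: transpose_def vec_eq_iff)
lemma transpose_uminus': "transpose (- (A::real^'n^'m)) = - transpose A"
  by (simp add: transpose_def vec_eq_iff)

lemma matrix_mul_uminus_left: "(- (A::real^'n^'m)) ** (B::real^'k^'n) = - (A ** B)"
  by (vector matrix_matrix_mult_def sum_negf)
lemma matrix_mul_uminus_right: "(A::real^'n^'m) ** (- (B::real^'k^'n)) = - (A ** B)"
  by (vector matrix_matrix_mult_def sum_negf)

lemma bl_transpose: "bounded_linear (transpose :: real^'n^'m \<Rightarrow> real^'m^'n)"
  by (rule linear_conv_bounded_linear[THEN iffD1]) (auto intro!: linearI simp: transpose_add' transpose_scaleR')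

definition FF :: "(real \<Rightarrow> real^'n^'n) \<Rightarrow> real \<Rightarrow> real^'n^'n" where
  "FF V t = solphi V 0 t"
definition GG :: "(real \<Rightarrow> real^'n^'n) \<Rightarrow> real \<Rightarrow> real^'n^'n" where
  "GG V t = transpose (solphi (\<lambda>r. - transpose (V r)) 0 t)"

context
  fixes V :: "real \<Rightarrow> real^'n^'n"
  assumes V: "continuous_on UNIV V"
begin

lemma FF_deriv: "(FF V has_vector_derivative V t ** FF V t) (at t)"
  unfolding FF_def[abs_def] by (rule solphi_deriv[OF V])

lemma FF_0: "FF V 0 = mat 1"
  unfolding FF_def using solphi_eq[OF V, of 0 0] by simp

lemma Vt_cont: "continuous_on UNIV (\<lambda>r. - transpose (V r))"
  by (intro continuous_intros bounded_linear.continuous_on[OF bl_transpose V])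

lemma GG_deriv: "(GG V has_vector_derivative - (GG V t ** V t)) (at t)"
proof -
  have "((\<lambda>t. transpose (solphi (\<lambda>r. - transpose (V r)) 0 t)) has_vector_derivative
      transpose (- transpose (V t) ** solphi (\<lambda>r. - transpose (V r)) 0 t)) (at t)"
    by (rule bounded_linear.has_vector_derivative[OF bl_transpose solphi_deriv[OF Vt_cont]])
  moreover have "transpose (- transpose (V t) ** solphi (\<lambda>r. - transpose (V r)) 0 t) = - (GG V t ** V t)"
    by (simp add: GG_def matrix_transpose_mul transpose_uminus' matrix_mul_uminus_right) 
  ultimately show ?thesis unfolding GG_def[abs_def] by simp
qed

lemma GG_0: "GG V 0 = mat 1"
  unfolding GG_def using solphi_eq[OF Vt_cont, of 0 0] by simp

lemma GG_sol_const:
  assumes X: "\<And>t. (X has_vector_derivative V t ** X t) (at t)"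
  shows "GG V t ** X t = X 0"
proof -
  have D: "\<And>x. x \<in> UNIV \<Longrightarrow> ((\<lambda>u. GG V u ** X u) has_vector_derivative 0) (at x within UNIV)"
  proof -
    fix x
    have "((\<lambda>u. GG V u ** X u) has_vector_derivative GG V x ** (V x ** X x) + (- (GG V x ** V x)) ** X x) (at x)"
      by (rule bounded_bilinear.has_vector_derivative[OF bb_mmult GG_deriv X])
    moreover have "GG V x ** (V x ** X x) + (- (GG V x ** V x)) ** X x = 0"
      by (simp add: matrix_mul_assoc matrix_mul_uminus_left)
    ultimately show "((\<lambda>u. GG V u ** X u) has_vector_derivative 0) (at x within UNIV)" by simp
  qed
  obtain c where c: "\<And>x. x \<in> UNIV \<Longrightarrow> GG V x ** X x = c"
    by (rule has_vector_derivative_zero_constant[of UNIV "\<lambda>u. GG V u ** X u"]) (use D in auto)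
  from c[of t] c[of 0] show ?thesis by (simp add: GG_0)
qed

lemma GG_FF: "GG V t ** FF V t = mat 1"
  using GG_sol_const[OF FF_deriv] by (simp add: FF_0)

lemma FF_GG: "FF V t ** GG V t = mat 1"
  using GG_FF matrix_left_right_inverse by blast

lemma sol_rep:
  assumes X: "\<And>t. (X has_vector_derivative V t ** X t) (at t)"
  shows "X t = FF V t ** X 0"
proof -
  have "X t = (FF V t ** GG V t) ** X t" by (simp add: FF_GG)
  also have "\<dots> = FF V t ** (GG V t ** X t)" by (simp add: matrix_mul_assoc)
  finally show ?thesis using GG_sol_const[OF X] by simp
qed

lemma is_transition_rep:
  assumes P: "is_transition V Phi"
  shows "Phi = (\<lambda>t s. FF V t ** GG V s)"
proof (intro ext)
  fix t s
  have X: "\<And>t. ((\<lambda>r. Phi r s) has_vector_derivative V t ** Phi t s) (at t)"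
    using P unfolding is_transition_def by blast
  have rep: "Phi u s = FF V u ** Phi 0 s" for u
    by (rule sol_rep[OF X])
  have "mat 1 = FF V s ** Phi 0 s" using rep[of s] P unfolding is_transition_def by simp
  then have "GG V s = GG V s ** (FF V s ** Phi 0 s)" by (metis matrix_mul_rid)
  also have "\<dots> = Phi 0 s" by (simp add: matrix_mul_assoc GG_FF)
  finally show "Phi t s = FF V t ** GG V s" using rep[of t] by simp
qed

lemma transition_rep: "transition V t s = FF V t ** GG V s"
proof -
  have ex: "is_transition V (\<lambda>t s. FF V t ** GG V s)"
    using transition_exists[OF V] is_transition_rep by metis
  have "transition V = (\<lambda>t s. FF V t ** GG V s)"
    unfolding transition_def
    by (rule the_equality[where P="is_transition V", OF ex is_transition_rep])
  then show ?thesis by simp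
qed

lemma transition_self[simp]: "transition V s s = mat 1"
  by (simp add: transition_rep FF_GG)

lemma transition_comp: "transition V t r ** transition V r s = transition V t s"
proof -
  have "FF V t ** GG V r ** (FF V r ** GG V s) = FF V t ** (GG V r ** FF V r) ** GG V s"
    by (simp add: matrix_mul_assoc)
  then show ?thesis by (simp add: transition_rep GG_FF)
qed

lemma FF_cont: "continuous_on UNIV (FF V)"
  unfolding FF_def[abs_def] by (rule solphi_cont[OF V])

lemma GG_cont: "continuous_on UNIV (GG V)"
  unfolding GG_def[abs_def] by (rule bounded_linear.continuous_on[OF bl_transpose solphi_cont[OF Vt_cont]])

lemma transition_deriv1: "((\<lambda>t. transition V t s) has_vector_derivative V t ** transition V t s) (at t)"
proof -
  have "((\<lambda>t. FF V t ** GG V s) has_vector_derivative (V t ** FF V t) ** GG V s) (at t)"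
    by (rule bounded_linear.has_vector_derivative[OF bounded_bilinear.bounded_linear_left[OF bb_mmult] FF_deriv])
  then show ?thesis by (simp add: transition_rep matrix_mul_assoc)
qed

lemma transition_deriv2: "((\<lambda>s. transition V t s) has_vector_derivative - (transition V t s ** V s)) (at s)"
proof -
  have "((\<lambda>s. FF V t ** GG V s) has_vector_derivative FF V t ** (- (GG V s ** V s))) (at s)"
    by (rule bounded_linear.has_vector_derivative[OF bounded_bilinear.bounded_linear_right[OF bb_mmult] GG_deriv])
  then show ?thesis by (simp add: transition_rep matrix_mul_assoc matrix_mul_uminus_right)
qed

lemma transition_cont1: "continuous_on UNIV (\<lambda>t. transition V t s)"
  unfolding transition_rep
  by (rule bounded_linear.continuous_on[OF bounded_bilinear.bounded_linear_left[OF bb_mmult] FF_cont])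

lemma transition_cont2: "continuous_on UNIV (\<lambda>s. transition V t s)"
  unfolding transition_rep
  by (rule bounded_linear.continuous_on[OF bounded_bilinear.bounded_linear_right[OF bb_mmult] GG_cont])

end




lemma mv_uminus_left: "(- (M::real^'n^'m)) *v x = - (M *v x)"
  by (vector matrix_vector_mult_def sum_negf)
lemma mv_uminus_right: "(M::real^'n^'m) *v (- x) = - (M *v x)"
  by (vector matrix_vector_mult_def sum_negf)
lemma mm_diff_rdistrib: "((A::real^'n^'m) - B) ** (C::real^'k^'n) = A ** C - B ** C"
  by (vector matrix_matrix_mult_def sum_subtractf left_diff_distrib)
lemma mm_diff_ldistrib: "(A::real^'n^'m) ** ((B::real^'k^'n) - C) = A ** B - A ** C"
  by (vector matrix_matrix_mult_def sum_subtractf right_diff_distrib)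

lemma mnorm_mv: "norm (M *v x) \<le> mnorm M * norm x"
  unfolding mnorm_def by (rule onorm[OF matrix_vector_mul_bounded_linear])

lemma mnorm_le: "(\<And>x. norm (M *v x) \<le> b * norm x) \<Longrightarrow> mnorm M \<le> b"
  unfolding mnorm_def by (rule onorm_le)

lemma mnorm_uminus: "mnorm (- M) = mnorm M"
  unfolding mnorm_def mv_uminus_left by (rule onorm_neg)

lemma voc:
  fixes X :: "real \<Rightarrow> real^'n^'n" and Kp :: "real \<Rightarrow> real^'m^'n" and C :: "real \<Rightarrow> real^'n^'m"
  assumes X: "continuous_on UNIV X" and Kp: "continuous_on UNIV Kp" and C: "continuous_on UNIV C"
    and Y: "Y = (\<lambda>t. X t - Kp t ** C t)"
  shows "transition Y s t = transition X s t + sint (\<lambda>r. - (transition X s r ** (Kp r ** C r) ** transition Y r t)) t s"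
proof -
  have Yc: "continuous_on UNIV Y" unfolding Y
    by (intro continuous_intros bounded_bilinear.continuous_on[OF bb_mmult Kp C] X)
  let ?h = "\<lambda>r. - (transition X s r ** (Kp r ** C r) ** transition Y r t)"
  let ?H = "\<lambda>r. transition X s r ** transition Y r t"
  have hc: "continuous_on UNIV ?h"
    by (intro continuous_intros bounded_bilinear.continuous_on[OF bb_mmult]
        transition_cont2[OF X] transition_cont1[OF Yc] Kp C)
  have Hd: "(?H has_vector_derivative ?h r) (at r)" for r
  proof -
    have "(?H has_vector_derivative transition X s r ** (Y r ** transition Y r t) + (- (transition X s r ** X r)) ** transition Y r t) (at r)"
      by (rule bounded_bilinear.has_vector_derivative[OF bb_mmult transition_deriv2[OF X] transition_deriv1[OF Yc]])
    moreover have "transition X s r ** (Y r ** transition Y r t) + (- (transition X s r ** X r)) ** transition Y r t = ?h r"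
      by (simp add: Y mm_diff_rdistrib mm_diff_ldistrib matrix_mul_uminus_left matrix_mul_assoc)
    ultimately show ?thesis by simp
  qed
  have "?H s - ?H t = sint ?h t s" by (rule sint_ftc[OF Hd hc])
  then show ?thesis by (simp add: transition_self[OF X] transition_self[OF Yc] algebra_simps)
qed

lemma voc_vec:
  fixes X :: "real \<Rightarrow> real^'n^'n" and Kp :: "real \<Rightarrow> real^'m^'n" and C :: "real \<Rightarrow> real^'n^'m"
    and D :: "real^'n^'k"
  assumes X: "continuous_on UNIV X" and Kp: "continuous_on UNIV Kp" and C: "continuous_on UNIV C"
    and Y: "Y = (\<lambda>t. X t - Kp t ** C t)"
  shows "D *v (transition Y s t *v x) = D *v (transition X s t *v x)
     + sint (\<lambda>r. - (D *v (transition X s r *v (Kp r *v (C r *v (transition Y r t *v x)))))) t s"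
proof -
  have Yc: "continuous_on UNIV Y" unfolding Y
    by (intro continuous_intros bounded_bilinear.continuous_on[OF bb_mmult Kp C] X)
  let ?h = "\<lambda>r. - (transition X s r ** (Kp r ** C r) ** transition Y r t)"
  have hc: "continuous_on UNIV ?h"
    by (intro continuous_intros bounded_bilinear.continuous_on[OF bb_mmult]
        transition_cont2[OF X] transition_cont1[OF Yc] Kp C)
  define L where "L M = D *v (M *v x)" for M :: "real^'n^'n"
  have L: "bounded_linear L"
    unfolding L_def
    by (intro bounded_linear_compose[OF bounded_bilinear.bounded_linear_right[OF bb_mvmult]]
        bounded_bilinear.bounded_linear_left[OF bb_mvmult])
  have "L (transition Y s t) = L (transition X s t) + L (sint ?h t s)"
    using voc[OF X Kp C Y, of s t] L by (simp add: linear_simps)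
  also have "L (sint ?h t s) = sint (\<lambda>r. L (?h r)) t s"
    by (rule sint_linear[OF L hc, symmetric])
  finally show ?thesis
    by (simp add: L_def mv_uminus_left mv_uminus_right matrix_vector_mul_assoc matrix_mul_assoc)
qed

lemma gronwall_fwd:
  fixes u :: "real \<Rightarrow> real"
  assumes u: "continuous_on UNIV u" and u0: "\<And>r. u r \<ge> 0" and \<alpha>: "\<alpha> \<ge> 0" and \<beta>: "\<beta> > 0"
    and le: "\<And>s. u s \<le> \<alpha> + \<beta> * \<bar>sint u t s\<bar>"
    and st: "t \<le> s"
  shows "u s \<le> \<alpha> * exp (\<beta> * (s - t))"
proof -
  define D where "D \<tau> = exp (- \<beta> * \<tau>) * (sint u t \<tau> + \<alpha> / \<beta>)" for \<tau>
  have W: "(sint u t has_real_derivative u \<tau>) (at \<tau>)" for \<tau>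
    using sint_deriv[OF u] by (simp add: has_real_derivative_iff_has_vector_derivative)
  have "D s \<le> D t"
  proof (rule DERIV_nonpos_imp_nonincreasing[OF st])
    fix \<tau> assume "t \<le> \<tau>" "\<tau> \<le> s"
    have Wn: "sint u t \<tau> \<ge> 0" by (rule sint_nonneg[OF u \<open>t \<le> \<tau>\<close>]) (simp add: u0)
    have "(D has_real_derivative exp (- \<beta> * \<tau>) * u \<tau> + (- \<beta>) * exp (- \<beta> * \<tau>) * (sint u t \<tau> + \<alpha> / \<beta>)) (at \<tau>)"
      unfolding D_def[abs_def]
      by (rule derivative_eq_intros W refl | simp)+
    moreover have "exp (- \<beta> * \<tau>) * u \<tau> + (- \<beta>) * exp (- \<beta> * \<tau>) * (sint u t \<tau> + \<alpha> / \<beta>)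
        = exp (- \<beta> * \<tau>) * (u \<tau> - \<alpha> - \<beta> * sint u t \<tau>)"
      using \<beta> by (simp add: field_simps)
    moreover have "u \<tau> - \<alpha> - \<beta> * sint u t \<tau> \<le> 0" using le[of \<tau>] Wn by simp
    ultimately show "\<exists>y. (D has_real_derivative y) (at \<tau>) \<and> y \<le> 0"
      by (metis mult_nonneg_nonpos exp_ge_zero)
  qed
  then have "exp (- \<beta> * s) * (sint u t s + \<alpha> / \<beta>) \<le> exp (- \<beta> * t) * (\<alpha> / \<beta>)"
    by (simp add: D_def)
  then have "exp (\<beta> * s) * (exp (- \<beta> * s) * (sint u t s + \<alpha> / \<beta>)) \<le> exp (\<beta> * s) * (exp (- \<beta> * t) * (\<alpha> / \<beta>))"
    by (rule mult_left_mono) simp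
  then have W: "sint u t s + \<alpha> / \<beta> \<le> exp (\<beta> * (s - t)) * (\<alpha> / \<beta>)"
    by (simp add: algebra_simps flip: exp_add)
  have "u s \<le> \<alpha> + \<beta> * sint u t s"
    using le[of s] sint_nonneg[OF u st] u0 by simp
  also have "\<dots> \<le> \<alpha> + \<beta> * (exp (\<beta> * (s - t)) * (\<alpha> / \<beta>) - \<alpha> / \<beta>)"
    using W \<beta> by (intro add_left_mono mult_left_mono) auto
  also have "\<dots> = \<alpha> * exp (\<beta> * (s - t))"
    using \<beta> by (simp add: field_simps)
  finally show ?thesis .
qed

lemma gronwall_bwd:
  fixes u :: "real \<Rightarrow> real"
  assumes u: "continuous_on UNIV u" and u0: "\<And>r. u r \<ge> 0" and \<alpha>: "\<alpha> \<ge> 0" and \<beta>: "\<beta> > 0"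
    and le: "\<And>s. u s \<le> \<alpha> + \<beta> * \<bar>sint u t s\<bar>"
    and st: "s \<le> t"
  shows "u s \<le> \<alpha> * exp (\<beta> * (t - s))"
proof -
  define D where "D \<tau> = exp (\<beta> * \<tau>) * (sint u \<tau> t + \<alpha> / \<beta>)" for \<tau>
  have W: "((\<lambda>\<tau>. sint u \<tau> t) has_real_derivative - u \<tau>) (at \<tau>)" for \<tau>
  proof -
    have "((\<lambda>\<tau>. - sint u t \<tau>) has_real_derivative - u \<tau>) (at \<tau>)"
      using sint_deriv[OF u] by (auto intro!: derivative_eq_intros simp: has_real_derivative_iff_has_vector_derivative)
    then show ?thesis by (subst sint_swap) simp
  qed
  have "D s \<le> D t"
  proof (rule DERIV_nonneg_imp_nondecreasing[OF st])
    fix \<tau> assume "s \<le> \<tau>" "\<tau> \<le> t"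
    have Wn: "sint u \<tau> t \<ge> 0" by (rule sint_nonneg[OF u \<open>\<tau> \<le> t\<close>]) (simp add: u0)
    have abs: "\<bar>sint u t \<tau>\<bar> = sint u \<tau> t" using Wn by (subst sint_swap) simp
    have "(D has_real_derivative exp (\<beta> * \<tau>) * (- u \<tau>) + \<beta> * exp (\<beta> * \<tau>) * (sint u \<tau> t + \<alpha> / \<beta>)) (at \<tau>)"
      unfolding D_def[abs_def]
      by (rule derivative_eq_intros W refl | simp)+
    moreover have "exp (\<beta> * \<tau>) * (- u \<tau>) + \<beta> * exp (\<beta> * \<tau>) * (sint u \<tau> t + \<alpha> / \<beta>)
        = exp (\<beta> * \<tau>) * (\<alpha> + \<beta> * sint u \<tau> t - u \<tau>)"
      using \<beta> by (simp add: field_simps)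
    moreover have "\<alpha> + \<beta> * sint u \<tau> t - u \<tau> \<ge> 0" using le[of \<tau>] abs by simp
    ultimately show "\<exists>y. (D has_real_derivative y) (at \<tau>) \<and> y \<ge> 0"
      by (metis mult_nonneg_nonneg exp_ge_zero)
  qed
  then have "exp (- \<beta> * s) * (exp (\<beta> * s) * (sint u s t + \<alpha> / \<beta>)) \<le> exp (- \<beta> * s) * (exp (\<beta> * t) * (\<alpha> / \<beta>))"
    by (intro mult_left_mono) (simp_all add: D_def)
  then have W: "sint u s t + \<alpha> / \<beta> \<le> exp (\<beta> * (t - s)) * (\<alpha> / \<beta>)"
    by (simp add: algebra_simps flip: exp_add)
  have abs: "\<bar>sint u t s\<bar> = sint u s t"
    using sint_nonneg[OF u st] u0 by (subst sint_swap) simp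
  have "u s \<le> \<alpha> + \<beta> * sint u s t"
    using le[of s] abs by simp
  also have "\<dots> \<le> \<alpha> + \<beta> * (exp (\<beta> * (t - s)) * (\<alpha> / \<beta>) - \<alpha> / \<beta>)"
    using W \<beta> by (intro add_left_mono mult_left_mono) auto
  also have "\<dots> = \<alpha> * exp (\<beta> * (t - s))"
    using \<beta> by (simp add: field_simps)
  finally show ?thesis .
qed

lemma gronwall:
  fixes u :: "real \<Rightarrow> real"
  assumes u: "continuous_on UNIV u" and u0: "\<And>r. u r \<ge> 0" and \<alpha>: "\<alpha> \<ge> 0" and \<beta>: "\<beta> > 0"
    and le: "\<And>s. u s \<le> \<alpha> + \<beta> * \<bar>sint u t s\<bar>"
  shows "u s \<le> \<alpha> * exp (\<beta> * \<bar>s - t\<bar>)"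
proof (cases "t \<le> s")
  case True
  then show ?thesis using gronwall_fwd[OF assms True] by simp
next
  case False
  then show ?thesis using gronwall_bwd[OF assms, of s] by simp
qed




lemma mnorm_nonneg: "mnorm (M::real^'n^'m) \<ge> 0"
  unfolding mnorm_def by (rule onorm_pos_le[OF matrix_vector_mul_bounded_linear])

lemma mv_bound:
  assumes "mnorm M \<le> b" 
  shows "norm (M *v x) \<le> b * norm x"
  using mnorm_mv[of M x] assms by (meson mult_right_mono norm_ge_zero order_trans)

lemma kernel_bound:
  fixes X :: "real \<Rightarrow> real^'n^'n" and Kp :: "real \<Rightarrow> real^'m^'n" and C :: "real \<Rightarrow> real^'n^'m"
  assumes nubg: "nonuniform_bounded_growth X K0 aX \<epsilon>" and aX: "aX \<ge> 0"
    and Kb: "\<forall>z. mnorm (Kp z) \<le> \<K> * exp (- \<delta> * \<bar>z\<bar>)"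
    and Cb: "\<forall>z. mnorm (C z) \<le> \<C> * exp (\<gamma> * \<bar>z\<bar>)"
    and pos: "K0 > 0" "\<K> > 0" "\<C> > 0" "\<gamma> \<ge> 0" and d: "\<delta> > \<gamma> + \<epsilon>"
    and sr: "\<bar>s - r\<bar> \<le> \<sigma>"
  shows "norm (C s *v (transition X s r *v (Kp r *v v))) \<le> \<C> * K0 * \<K> * exp ((\<gamma> + aX) * \<sigma>) * norm v"
proof -
  have 1: "norm (C s *v (transition X s r *v (Kp r *v v))) \<le> \<C> * exp (\<gamma> * \<bar>s\<bar>) * norm (transition X s r *v (Kp r *v v))"
    by (rule mv_bound) (use Cb in auto)
  have 2: "norm (transition X s r *v (Kp r *v v)) \<le> K0 * exp (\<epsilon> * \<bar>r\<bar>) * exp (aX * \<bar>s - r\<bar>) * norm (Kp r *v v)"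
    by (rule mv_bound) (use nubg in \<open>auto simp: nonuniform_bounded_growth_def\<close>)
  have 3: "norm (Kp r *v v) \<le> \<K> * exp (- \<delta> * \<bar>r\<bar>) * norm v"
    by (rule mv_bound) (use Kb in auto)
  have "norm (C s *v (transition X s r *v (Kp r *v v))) \<le>
     \<C> * exp (\<gamma> * \<bar>s\<bar>) * (K0 * exp (\<epsilon> * \<bar>r\<bar>) * exp (aX * \<bar>s - r\<bar>) * (\<K> * exp (- \<delta> * \<bar>r\<bar>) * norm v))"
    using 1 2 3 pos by (smt (verit, ccfv_SIG) exp_gt_zero mult_left_mono mult_pos_pos)
  also have "\<dots> = \<C> * K0 * \<K> * exp (\<gamma> * \<bar>s\<bar> + \<epsilon> * \<bar>r\<bar> + aX * \<bar>s - r\<bar> + (- \<delta> * \<bar>r\<bar>)) * norm v"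
    unfolding exp_add by (simp only: mult_ac)
  also have "\<dots> \<le> \<C> * K0 * \<K> * exp ((\<gamma> + aX) * \<sigma>) * norm v"
  proof -
    have "\<bar>s\<bar> \<le> \<bar>r\<bar> + \<sigma>" using sr by linarith
    then have a: "\<gamma> * \<bar>s\<bar> \<le> \<gamma> * \<bar>r\<bar> + \<gamma> * \<sigma>" using pos by (metis distrib_left mult_left_mono)
    have b: "aX * \<bar>s - r\<bar> \<le> aX * \<sigma>" by (rule mult_left_mono[OF sr aX])
    have c: "(\<gamma> + \<epsilon> - \<delta>) * \<bar>r\<bar> \<le> 0" using d by (intro mult_nonpos_nonneg) auto
    have "\<gamma> * \<bar>s\<bar> + \<epsilon> * \<bar>r\<bar> + aX * \<bar>s - r\<bar> + (- \<delta> * \<bar>r\<bar>) \<le> (\<gamma> + aX) * \<sigma>"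
      using a b c by (simp add: algebra_simps)
    then show ?thesis using pos by (intro mult_right_mono mult_left_mono) auto
  qed
  finally show ?thesis .
qed

lemma nubg_perturb:
  fixes A :: "real \<Rightarrow> real^'n^'n" and K :: "real \<Rightarrow> real^'m^'n" and C :: "real \<Rightarrow> real^'n^'m"
  assumes Ac: "continuous_on UNIV A" and Kc: "continuous_on UNIV K" and Cc: "continuous_on UNIV C"
    and nubg: "nonuniform_bounded_growth A K0 a \<epsilon>" and a: "a \<ge> 0"
    and Kb: "\<forall>z. mnorm (K z) \<le> \<K> * exp (- \<delta> * \<bar>z\<bar>)"
    and Cb: "\<forall>z. mnorm (C z) \<le> \<C> * exp (\<gamma> * \<bar>z\<bar>)"
    and pos: "K0 > 0" "\<K> > 0" "\<C> > 0" "\<gamma> \<ge> 0" and d: "\<delta> > \<gamma> + \<epsilon>"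
  shows "nonuniform_bounded_growth (\<lambda>t. A t - K t ** C t) K0 (a + K0 * \<K> * \<C>) \<epsilon>"
  unfolding nonuniform_bounded_growth_def
proof (intro allI)
  fix s \<tau> :: real
  define B where "B = (\<lambda>t. A t - K t ** C t)"
  define \<beta> where "\<beta> = K0 * \<K> * \<C>"
  have \<beta>: "\<beta> > 0" using pos by (simp add: \<beta>_def)
  have Bc: "continuous_on UNIV B" unfolding B_def
    by (intro continuous_intros bounded_bilinear.continuous_on[OF bb_mmult Kc Cc] Ac)
  show "mnorm (transition B s \<tau>) \<le> K0 * exp (\<epsilon> * \<bar>\<tau>\<bar>) * exp ((a + \<beta>) * \<bar>s - \<tau>\<bar>)"
  proof (rule mnorm_le)
    fix x :: "real^'n"
    define \<alpha> where "\<alpha> = K0 * exp (\<epsilon> * \<bar>\<tau>\<bar>) * norm x"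
    have \<alpha>: "\<alpha> \<ge> 0" using pos by (simp add: \<alpha>_def)
    define u where "u r = exp (- a * \<bar>r - \<tau>\<bar>) * norm (transition B r \<tau> *v x)" for r
    have cBx: "continuous_on UNIV (\<lambda>r. transition B r \<tau> *v x)"
      by (rule bounded_linear.continuous_on[OF bounded_bilinear.bounded_linear_left[OF bb_mvmult] transition_cont1[OF Bc]])
    have uc: "continuous_on UNIV u" unfolding u_def[abs_def]
      by (intro continuous_intros cBx)
    have u0: "u r \<ge> 0" for r by (simp add: u_def)
    have key: "u s' \<le> \<alpha> + \<beta> * \<bar>sint u \<tau> s'\<bar>" for s'
    proof -
      let ?d = "\<bar>s' - \<tau>\<bar>"
      let ?h = "\<lambda>r. - (transition A s' r *v (K r *v (C r *v (transition B r \<tau> *v x))))"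
      have voc1: "transition B s' \<tau> *v x = transition A s' \<tau> *v x + sint ?h \<tau> s'"
        using voc_vec[OF Ac Kc Cc B_def, of "mat 1" s' \<tau> x] by simp
      have hc: "continuous_on UNIV ?h"
        by (intro continuous_intros bounded_bilinear.continuous_on[OF bb_mvmult]
            transition_cont2[OF Ac] Kc Cc cBx)
      have gc: "continuous_on UNIV (\<lambda>r. \<beta> * exp (a * ?d) * u r)"
        by (intro continuous_intros uc)
      have "norm (sint ?h \<tau> s') \<le> \<bar>sint (\<lambda>r. \<beta> * exp (a * ?d) * u r) \<tau> s'\<bar>"
      proof (rule sint_norm_bound[OF hc gc])
        fix r assume r: "r \<in> {min \<tau> s'..max \<tau> s'}"
        let ?w = "transition B r \<tau> *v x"
        have 1: "norm (transition A s' r *v (K r *v (C r *v ?w))) \<le> K0 * exp (\<epsilon> * \<bar>r\<bar>) * exp (a * \<bar>s' - r\<bar>) * norm (K r *v (C r *v ?w))"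
          by (rule mv_bound) (use nubg in \<open>auto simp: nonuniform_bounded_growth_def\<close>)
        have 2: "norm (K r *v (C r *v ?w)) \<le> \<K> * exp (- \<delta> * \<bar>r\<bar>) * norm (C r *v ?w)"
          by (rule mv_bound) (use Kb in auto)
        have 3: "norm (C r *v ?w) \<le> \<C> * exp (\<gamma> * \<bar>r\<bar>) * norm ?w"
          by (rule mv_bound) (use Cb in auto)
        have "norm (transition A s' r *v (K r *v (C r *v ?w))) \<le>
            K0 * exp (\<epsilon> * \<bar>r\<bar>) * exp (a * \<bar>s' - r\<bar>) * (\<K> * exp (- \<delta> * \<bar>r\<bar>) * (\<C> * exp (\<gamma> * \<bar>r\<bar>) * norm ?w))"
          using 1 2 3 pos by (smt (verit, ccfv_SIG) exp_gt_zero mult_left_mono mult_pos_pos)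
        also have "\<dots> = \<beta> * exp ((\<epsilon> - \<delta> + \<gamma>) * \<bar>r\<bar>) * exp (a * \<bar>s' - r\<bar>) * norm ?w"
          unfolding \<beta>_def by (simp add: algebra_simps flip: exp_add)
        also have "\<dots> \<le> \<beta> * 1 * exp (a * \<bar>s' - r\<bar>) * norm ?w"
          using \<beta> d by (intro mult_right_mono mult_left_mono) (auto intro: mult_nonpos_nonneg)
        also have "exp (a * \<bar>s' - r\<bar>) = exp (a * ?d) * exp (- a * \<bar>r - \<tau>\<bar>)"
        proof -
          have "\<bar>s' - r\<bar> = ?d - \<bar>r - \<tau>\<bar>" using r by (auto simp: abs_if)
          then have "a * \<bar>s' - r\<bar> = a * ?d + - a * \<bar>r - \<tau>\<bar>" by (subst (1) \<open>\<bar>s' - r\<bar> = ?d - \<bar>r - \<tau>\<bar>\<close>) (simp only: distrib_left mult_minus_right mult_minus_left diff_conv_add_uminus)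
          then show ?thesis by (simp flip: exp_add)
        qed
        finally show "norm (?h r) \<le> \<beta> * exp (a * ?d) * u r"
          by (simp add: u_def mult_ac)
      qed
      also have "sint (\<lambda>r. \<beta> * exp (a * ?d) * u r) \<tau> s' = \<beta> * exp (a * ?d) * sint u \<tau> s'"
        by (rule sint_linear[OF bounded_linear_mult_right uc])
      finally have N: "norm (sint ?h \<tau> s') \<le> \<beta> * exp (a * ?d) * \<bar>sint u \<tau> s'\<bar>"
        using \<beta> by (simp add: abs_mult)
      have NA: "norm (transition A s' \<tau> *v x) \<le> K0 * exp (\<epsilon> * \<bar>\<tau>\<bar>) * exp (a * ?d) * norm x"
        by (rule mv_bound) (use nubg in \<open>auto simp: nonuniform_bounded_growth_def\<close>)
      have "norm (transition B s' \<tau> *v x) \<le> exp (a * ?d) * (\<alpha> + \<beta> * \<bar>sint u \<tau> s'\<bar>)"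
        using voc1 N NA norm_triangle_ineq[of "transition A s' \<tau> *v x" "sint ?h \<tau> s'"]
        by (simp add: \<alpha>_def algebra_simps)
      then have "exp (- a * ?d) * norm (transition B s' \<tau> *v x) \<le> exp (- a * ?d) * (exp (a * ?d) * (\<alpha> + \<beta> * \<bar>sint u \<tau> s'\<bar>))"
        by (rule mult_left_mono) simp
      then show ?thesis by (simp add: u_def flip: exp_add mult.assoc)
    qed
    have "u s \<le> \<alpha> * exp (\<beta> * \<bar>s - \<tau>\<bar>)"
      by (rule gronwall[OF uc u0 \<alpha> \<beta> key])
    then have "exp (a * \<bar>s - \<tau>\<bar>) * u s \<le> exp (a * \<bar>s - \<tau>\<bar>) * (\<alpha> * exp (\<beta> * \<bar>s - \<tau>\<bar>))"
      by (rule mult_left_mono) simp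
    moreover have "exp (a * \<bar>s - \<tau>\<bar>) * u s = norm (transition B s \<tau> *v x)"
      by (simp add: u_def mult.assoc[symmetric] flip: exp_add)
    moreover have "exp (a * \<bar>s - \<tau>\<bar>) * (\<alpha> * exp (\<beta> * \<bar>s - \<tau>\<bar>)) = K0 * exp (\<epsilon> * \<bar>\<tau>\<bar>) * exp ((a + \<beta>) * \<bar>s - \<tau>\<bar>) * norm x"
      by (simp add: \<alpha>_def exp_add distrib_right mult_ac)
    ultimately show "norm (transition B s \<tau> *v x) \<le> K0 * exp (\<epsilon> * \<bar>\<tau>\<bar>) * exp ((a + \<beta>) * \<bar>s - \<tau>\<bar>) * norm x"
      by simp
  qed
qed




lemma cont_integrable: "continuous_on UNIV (h :: real \<Rightarrow> 'a::banach) \<Longrightarrow> h integrable_on {a..b}"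
  by (rule integrable_continuous_real) (rule continuous_on_subset, auto)

lemma cs_int:
  fixes f :: "real \<Rightarrow> real"
  assumes fc: "continuous_on UNIV f" and pq: "p \<le> q"
  shows "(integral {p..q} f)^2 \<le> (q - p) * integral {p..q} (\<lambda>s. (f s)^2)"
proof -
  define J where "J = integral {p..q} f"
  define I where "I = integral {p..q} (\<lambda>s. (f s)^2)"
  have f2c: "continuous_on UNIV (\<lambda>s. (f s)^2)" by (intro continuous_intros fc)
  have lam: "2 * l * J \<le> l^2 * (q - p) + I" for l
  proof -
    have "integral {p..q} (\<lambda>s. 2 * l * f s) \<le> integral {p..q} (\<lambda>s. l^2 + (f s)^2)"
    proof (rule Henstock_Kurzweil_Integration.integral_le)
      show "(\<lambda>s. 2 * l * f s) integrable_on {p..q}" by (intro cont_integrable continuous_intros fc)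
      show "(\<lambda>s. l^2 + (f s)^2) integrable_on {p..q}" by (intro cont_integrable continuous_intros fc)
      show "2 * l * f s \<le> l^2 + (f s)^2" for s
        using sum_squares_bound[of l "f s"] by (simp add: power2_eq_square mult_ac)
    qed
    moreover have "integral {p..q} (\<lambda>s. 2 * l * f s) = 2 * l * integral {p..q} f"
      by simp
    moreover have "integral {p..q} (\<lambda>s. l^2 + (f s)^2) = l^2 * (q - p) + I"
      using pq by (subst integral_add) (auto intro!: cont_integrable f2c simp: I_def)
    ultimately show ?thesis unfolding J_def by linarith
  qed
  show ?thesis
  proof (cases "p = q")
    case True
    then show ?thesis by simp
  next
    case False
    define d where "d = q - p"
    with pq False have d: "d > 0" by simp
    have "2 * (J / d) * J \<le> (J / d)^2 * (q - p) + I" by (rule lam)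
    moreover have "(J / d)^2 * (q - p) = J^2 / d" using d by (simp add: d_def[symmetric] power2_eq_square field_simps)
    moreover have "2 * (J / d) * J = 2 * (J^2 / d)" using d by (simp add: power2_eq_square field_simps)
    ultimately have "J^2 / d \<le> I" by linarith
    then have "J^2 \<le> I * d" using d by (simp add: pos_divide_le_eq)
    then show ?thesis by (simp add: J_def I_def d_def mult.commute)
  qed
qed

lemma sint_le_ivl:
  fixes g :: "real \<Rightarrow> real"
  assumes gc: "continuous_on UNIV g" and g0: "\<And>r. r \<in> {p..q} \<Longrightarrow> g r \<ge> 0"
    and t: "t \<in> {p..q}" and s: "s \<in> {p..q}"
  shows "\<bar>sint g t s\<bar> \<le> integral {p..q} g"
proof (cases "t \<le> s")
  case True
  have "integral {t..s} g \<le> integral {p..q} g"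
    by (rule integral_subset_le) (use t s g0 in \<open>auto intro!: cont_integrable gc\<close>)
  moreover have "integral {t..s} g \<ge> 0"
    by (rule Henstock_Kurzweil_Integration.integral_nonneg) (use t s g0 in \<open>auto intro!: cont_integrable gc\<close>)
  ultimately show ?thesis using True by (simp add: sint_def)
next
  case False
  have "integral {s..t} g \<le> integral {p..q} g"
    by (rule integral_subset_le) (use t s g0 in \<open>auto intro!: cont_integrable gc\<close>)
  moreover have "integral {s..t} g \<ge> 0"
    by (rule Henstock_Kurzweil_Integration.integral_nonneg) (use t s g0 in \<open>auto intro!: cont_integrable gc\<close>)
  ultimately show ?thesis using False by (simp add: sint_def)
qed

lemma core_cmp:
  fixes X :: "real \<Rightarrow> real^'n^'n" and Kp :: "real \<Rightarrow> real^'m^'n" and C :: "real \<Rightarrow> real^'n^'m"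
  assumes X: "continuous_on UNIV X" and Kp: "continuous_on UNIV Kp" and C: "continuous_on UNIV C"
    and Y: "Y = (\<lambda>t. X t - Kp t ** C t)"
    and pq: "p \<le> q" and t0: "t0 \<in> {p..q}" and L: "L \<ge> 0"
    and kern: "\<And>s r v. s \<in> {p..q} \<Longrightarrow> r \<in> {p..q} \<Longrightarrow> norm (C s *v (transition X s r *v (Kp r *v v))) \<le> L * norm v"
  shows "integral {p..q} (\<lambda>s. (norm (C s *v (transition X s t0 *v x)))^2)
      \<le> (2 + 2 * L^2 * (q - p)^2) * integral {p..q} (\<lambda>s. (norm (C s *v (transition Y s t0 *v x)))^2)"
proof -
  have Yc: "continuous_on UNIV Y" unfolding Y
    by (intro continuous_intros bounded_bilinear.continuous_on[OF bb_mmult Kp C] X)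
  define nY where "nY s = norm (C s *v (transition Y s t0 *v x))" for s
  define nX where "nX s = norm (C s *v (transition X s t0 *v x))" for s
  have cYx: "continuous_on UNIV (\<lambda>r. transition Y r t0 *v x)"
    by (rule bounded_linear.continuous_on[OF bounded_bilinear.bounded_linear_left[OF bb_mvmult] transition_cont1[OF Yc]])
  have cXx: "continuous_on UNIV (\<lambda>r. transition X r t0 *v x)"
    by (rule bounded_linear.continuous_on[OF bounded_bilinear.bounded_linear_left[OF bb_mvmult] transition_cont1[OF X]])
  have nYc: "continuous_on UNIV nY" unfolding nY_def[abs_def]
    by (intro continuous_intros bounded_bilinear.continuous_on[OF bb_mvmult C cYx])
  have nXc: "continuous_on UNIV nX" unfolding nX_def[abs_def]
    by (intro continuous_intros bounded_bilinear.continuous_on[OF bb_mvmult C cXx])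
  define J where "J = integral {p..q} nY"
  define I where "I = integral {p..q} (\<lambda>s. (nY s)^2)"
  have pt: "nX s \<le> nY s + L * J" if s: "s \<in> {p..q}" for s
  proof -
    let ?h = "\<lambda>r. - (C s *v (transition X s r *v (Kp r *v (C r *v (transition Y r t0 *v x)))))"
    have v: "C s *v (transition Y s t0 *v x) = C s *v (transition X s t0 *v x) + sint ?h t0 s"
      by (rule voc_vec[OF X Kp C Y])
    have hc: "continuous_on UNIV ?h"
      by (intro continuous_intros bounded_bilinear.continuous_on[OF bb_mvmult]
            transition_cont2[OF X] Kp C cYx)
    have gc: "continuous_on UNIV (\<lambda>r. L * nY r)" by (intro continuous_intros nYc)
    have "norm (sint ?h t0 s) \<le> \<bar>sint (\<lambda>r. L * nY r) t0 s\<bar>"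
    proof (rule sint_norm_bound[OF hc gc])
      fix r assume "r \<in> {min t0 s..max t0 s}"
      then have r: "r \<in> {p..q}" using s t0 by auto
      show "norm (?h r) \<le> L * nY r"
        using kern[OF s r] by (simp add: nY_def)
    qed
    also have "\<dots> \<le> integral {p..q} (\<lambda>r. L * nY r)"
      by (rule sint_le_ivl[OF gc _ t0 s]) (simp add: nY_def L)
    also have "\<dots> = L * J" by (simp add: J_def)
    finally have "norm (sint ?h t0 s) \<le> L * J" .
    moreover have "nX s \<le> nY s + norm (sint ?h t0 s)"
      unfolding nX_def nY_def v using norm_triangle_ineq4[of "C s *v (transition Y s t0 *v x)" "sint ?h t0 s"]
      by (simp add: v)
    ultimately show ?thesis by simp
  qed
  have CS: "J^2 \<le> (q - p) * I"
    unfolding J_def I_def by (rule cs_int[OF nYc pq])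
  have I0: "I \<ge> 0" unfolding I_def
    by (rule Henstock_Kurzweil_Integration.integral_nonneg) (auto intro!: cont_integrable continuous_intros nYc)
  have "integral {p..q} (\<lambda>s. (nX s)^2) \<le> integral {p..q} (\<lambda>s. 2 * (nY s)^2 + 2 * L^2 * ((q - p) * I))"
  proof (rule Henstock_Kurzweil_Integration.integral_le)
    show "(\<lambda>s. (nX s)^2) integrable_on {p..q}" by (intro cont_integrable continuous_intros nXc)
    show "(\<lambda>s. 2 * (nY s)^2 + 2 * L^2 * ((q - p) * I)) integrable_on {p..q}"
      by (intro cont_integrable continuous_intros nYc)
    fix s assume s: "s \<in> {p..q}"
    have "(nX s)^2 \<le> (nY s + L * J)^2"
      using pt[OF s] by (intro power_mono) (auto simp: nX_def)
    also have "\<dots> \<le> 2 * (nY s)^2 + 2 * (L * J)^2"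
      using sum_squares_bound[of "nY s" "L * J"] by (simp add: power2_eq_square algebra_simps)
    also have "(L * J)^2 = L^2 * J^2" by (simp add: power_mult_distrib)
    also have "2 * (nY s)^2 + 2 * (L^2 * J^2) \<le> 2 * (nY s)^2 + 2 * L^2 * ((q - p) * I)"
      using CS by (simp add: mult_left_mono)
    finally show "(nX s)^2 \<le> 2 * (nY s)^2 + 2 * L^2 * ((q - p) * I)" .
  qed
  also have "\<dots> = 2 * I + 2 * L^2 * ((q - p) * I) * (q - p)"
    using pq by (subst integral_add) (auto intro!: cont_integrable continuous_intros nYc simp: I_def)
  also have "\<dots> = (2 + 2 * L^2 * (q - p)^2) * I"
    by (simp add: power2_eq_square algebra_simps)
  finally show ?thesis by (simp add: nX_def nY_def I_def)
qed




lemma quad_tt: "x \<bullet> ((transpose M ** M) *v x) = (norm ((M::real^'n^'m) *v x))^2"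
proof -
  have "(transpose M ** M) *v x = (M *v x) v* M"
    by (simp add: matrix_vector_mul_assoc[symmetric])
  then have "x \<bullet> ((transpose M ** M) *v x) = ((M *v x) v* M) \<bullet> x" by (simp add: inner_commute)
  also have "\<dots> = (M *v x) \<bullet> (M *v x)" by (rule dot_lmul_matrix)
  finally show ?thesis by (simp add: power2_norm_eq_inner)
qed

lemma gram_quad:
  fixes Phi :: "real \<Rightarrow> real^'n^'n" and C :: "real \<Rightarrow> real^'n^'m"
  assumes Pc: "continuous_on UNIV Phi" and Cc: "continuous_on UNIV C"
  shows "x \<bullet> (integral {p..q} (\<lambda>s. transpose (Phi s) ** transpose (C s) ** C s ** Phi s) *v x)
       = integral {p..q} (\<lambda>s. (norm (C s *v (Phi s *v x)))^2)"
proof -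
  define L where "L M = x \<bullet> (M *v x)" for M :: "real^'n^'n"
  have L: "bounded_linear L" unfolding L_def
    by (intro bounded_linear_compose[OF bounded_linear_inner_right]
        bounded_bilinear.bounded_linear_left[OF bb_mvmult])
  have fc: "continuous_on UNIV (\<lambda>s. transpose (Phi s) ** transpose (C s) ** C s ** Phi s)"
    by (intro bounded_bilinear.continuous_on[OF bb_mmult] Pc Cc
        bounded_linear.continuous_on[OF bl_transpose])
  have "L (integral {p..q} (\<lambda>s. transpose (Phi s) ** transpose (C s) ** C s ** Phi s))
      = integral {p..q} (L \<circ> (\<lambda>s. transpose (Phi s) ** transpose (C s) ** C s ** Phi s))"
    by (rule integral_linear[OF cont_integrable[OF fc] L, symmetric])
  also have "L \<circ> (\<lambda>s. transpose (Phi s) ** transpose (C s) ** C s ** Phi s) = (\<lambda>s. (norm (C s *v (Phi s *v x)))^2)"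
  proof
    fix s
    have "transpose (Phi s) ** transpose (C s) ** C s ** Phi s = transpose (C s ** Phi s) ** (C s ** Phi s)"
      by (simp add: matrix_transpose_mul matrix_mul_assoc)
    then show "(L \<circ> (\<lambda>s. transpose (Phi s) ** transpose (C s) ** C s ** Phi s)) s = (norm (C s *v (Phi s *v x)))^2"
      by (simp add: L_def quad_tt matrix_vector_mul_assoc)
  qed
  finally show ?thesis by (simp add: L_def)
qed

lemma gram_M_quad:
  fixes V :: "real \<Rightarrow> real^'n^'n" and C :: "real \<Rightarrow> real^'n^'m"
  assumes V: "continuous_on UNIV V" and Cc: "continuous_on UNIV C"
  shows "x \<bullet> (gram_M V C p q *v x) = integral {p..q} (\<lambda>s. (norm (C s *v (transition V s p *v x)))^2)"
  unfolding gram_M_def by (rule gram_quad[OF transition_cont1[OF V] Cc])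

lemma gram_N_quad:
  fixes V :: "real \<Rightarrow> real^'n^'n" and C :: "real \<Rightarrow> real^'n^'m"
  assumes V: "continuous_on UNIV V" and Cc: "continuous_on UNIV C"
  shows "x \<bullet> (gram_N V C p q *v x) = integral {p..q} (\<lambda>s. (norm (C s *v (transition V s q *v x)))^2)"
  unfolding gram_N_def by (rule gram_quad[OF transition_cont1[OF V] Cc])

lemma mat_scal_mv: "((c::real) *\<^sub>R mat 1) *v (x::real^'n) = c *\<^sub>R x"
  by (metis matrix_vector_mul_lid scaleR_matrix_vector_assoc)

lemma loewner_lower: "loewner_le (c *\<^sub>R mat 1) G \<longleftrightarrow> (\<forall>x. c * (norm x)^2 \<le> x \<bullet> (G *v x))"
  by (simp add: loewner_le_def mat_scal_mv power2_norm_eq_inner)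

lemma loewner_upper: "loewner_le G (c *\<^sub>R mat 1) \<longleftrightarrow> (\<forall>x. x \<bullet> (G *v x) \<le> c * (norm x)^2)"
  by (simp add: loewner_le_def mat_scal_mv power2_norm_eq_inner)

lemma transfer_lower:
  assumes "e * (norm x)^2 \<le> QX" "QX \<le> c * QY" "c > 0"
  shows "e / c * (norm x)^2 \<le> QY"
proof -
  have "e * (norm x)^2 \<le> c * QY" using assms by linarith
  then show ?thesis using assms(3) by (simp add: field_simps mult.commute)
qed

lemma transfer_upper:
  assumes "QX \<le> e * (norm x)^2" "QY \<le> c * QX" "c > 0"
  shows "QY \<le> c * e * (norm x)^2"
proof -
  have "c * QX \<le> c * (e * (norm x)^2)" using assms by (intro mult_left_mono) auto
  then show ?thesis using assms(2) mult.assoc[of c e "(norm x)^2"] by linarith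
qed

lemma nuco_transfer:
  fixes X Y :: "real \<Rightarrow> real^'n^'n" and C :: "real \<Rightarrow> real^'n^'m" and c :: "real \<Rightarrow> real"
  assumes cpos: "\<And>\<sigma>. \<sigma> \<ge> 0 \<Longrightarrow> c \<sigma> > 0"
    and cM: "\<And>t \<sigma> x. \<sigma> \<ge> 0 \<Longrightarrow> x \<bullet> (gram_M X C t (t+\<sigma>) *v x) \<le> c \<sigma> * (x \<bullet> (gram_M Y C t (t+\<sigma>) *v x))"
    and cM': "\<And>t \<sigma> x. \<sigma> \<ge> 0 \<Longrightarrow> x \<bullet> (gram_M Y C t (t+\<sigma>) *v x) \<le> c \<sigma> * (x \<bullet> (gram_M X C t (t+\<sigma>) *v x))"
    and cN: "\<And>t \<sigma> x. \<sigma> \<ge> 0 \<Longrightarrow> x \<bullet> (gram_N X C t (t+\<sigma>) *v x) \<le> c \<sigma> * (x \<bullet> (gram_N Y C t (t+\<sigma>) *v x))"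
    and cN': "\<And>t \<sigma> x. \<sigma> \<ge> 0 \<Longrightarrow> x \<bullet> (gram_N Y C t (t+\<sigma>) *v x) \<le> c \<sigma> * (x \<bullet> (gram_N X C t (t+\<sigma>) *v x))"
    and N: "NUCO X C"
  shows "NUCO Y C"
proof -
  from N obtain \<nu>0 \<nu>1 \<nu>0' \<nu>1' and \<theta>0 \<rho>0 \<theta>1 \<rho>1 :: "real \<Rightarrow> real" where
    nn: "\<nu>0 \<ge> 0" "\<nu>1 \<ge> 0" "\<nu>0' \<ge> 0" "\<nu>1' \<ge> 0"
    and fp: "\<forall>\<sigma>\<ge>0. \<theta>0 \<sigma> > 0 \<and> \<rho>0 \<sigma> > 0 \<and> \<theta>1 \<sigma> > 0 \<and> \<rho>1 \<sigma> > 0"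
    and G: "\<forall>t. \<exists>\<sigma>0>0. \<forall>\<sigma>\<ge>\<sigma>0.
          loewner_le ((exp (-2 * \<nu>0 * \<bar>t\<bar>) * \<theta>0 \<sigma>) *\<^sub>R mat 1) (gram_M X C t (t + \<sigma>)) \<and>
          loewner_le (gram_M X C t (t + \<sigma>)) ((exp (2 * \<nu>1 * \<bar>t\<bar>) * \<theta>1 \<sigma>) *\<^sub>R mat 1) \<and>
          loewner_le ((exp (-2 * \<nu>0' * \<bar>t\<bar>) * \<rho>0 \<sigma>) *\<^sub>R mat 1) (gram_N X C t (t + \<sigma>)) \<and>
          loewner_le (gram_N X C t (t + \<sigma>)) ((exp (2 * \<nu>1' * \<bar>t\<bar>) * \<rho>1 \<sigma>) *\<^sub>R mat 1)"
    unfolding NUCO_def by blast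
  show ?thesis
    unfolding NUCO_def
  proof (intro exI conjI)
    show "\<nu>0 \<ge> 0" "\<nu>1 \<ge> 0" "\<nu>0' \<ge> 0" "\<nu>1' \<ge> 0" by (fact nn)+
    show "\<forall>\<sigma>\<ge>0. \<theta>0 \<sigma> / c \<sigma> > 0 \<and> \<rho>0 \<sigma> / c \<sigma> > 0 \<and> c \<sigma> * \<theta>1 \<sigma> > 0 \<and> c \<sigma> * \<rho>1 \<sigma> > 0"
      using fp cpos by auto
    show "\<forall>t. \<exists>\<sigma>0>0. \<forall>\<sigma>\<ge>\<sigma>0.
          loewner_le ((exp (-2 * \<nu>0 * \<bar>t\<bar>) * (\<theta>0 \<sigma> / c \<sigma>)) *\<^sub>R mat 1) (gram_M Y C t (t + \<sigma>)) \<and>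
          loewner_le (gram_M Y C t (t + \<sigma>)) ((exp (2 * \<nu>1 * \<bar>t\<bar>) * (c \<sigma> * \<theta>1 \<sigma>)) *\<^sub>R mat 1) \<and>
          loewner_le ((exp (-2 * \<nu>0' * \<bar>t\<bar>) * (\<rho>0 \<sigma> / c \<sigma>)) *\<^sub>R mat 1) (gram_N Y C t (t + \<sigma>)) \<and>
          loewner_le (gram_N Y C t (t + \<sigma>)) ((exp (2 * \<nu>1' * \<bar>t\<bar>) * (c \<sigma> * \<rho>1 \<sigma>)) *\<^sub>R mat 1)"
    proof
      fix t
      from G obtain \<sigma>0 where s0: "\<sigma>0 > 0" and H: "\<forall>\<sigma>\<ge>\<sigma>0.
          loewner_le ((exp (-2 * \<nu>0 * \<bar>t\<bar>) * \<theta>0 \<sigma>) *\<^sub>R mat 1) (gram_M X C t (t + \<sigma>)) \<and>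
          loewner_le (gram_M X C t (t + \<sigma>)) ((exp (2 * \<nu>1 * \<bar>t\<bar>) * \<theta>1 \<sigma>) *\<^sub>R mat 1) \<and>
          loewner_le ((exp (-2 * \<nu>0' * \<bar>t\<bar>) * \<rho>0 \<sigma>) *\<^sub>R mat 1) (gram_N X C t (t + \<sigma>)) \<and>
          loewner_le (gram_N X C t (t + \<sigma>)) ((exp (2 * \<nu>1' * \<bar>t\<bar>) * \<rho>1 \<sigma>) *\<^sub>R mat 1)"
        by blast
      show "\<exists>\<sigma>0>0. \<forall>\<sigma>\<ge>\<sigma>0.
          loewner_le ((exp (-2 * \<nu>0 * \<bar>t\<bar>) * (\<theta>0 \<sigma> / c \<sigma>)) *\<^sub>R mat 1) (gram_M Y C t (t + \<sigma>)) \<and>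
          loewner_le (gram_M Y C t (t + \<sigma>)) ((exp (2 * \<nu>1 * \<bar>t\<bar>) * (c \<sigma> * \<theta>1 \<sigma>)) *\<^sub>R mat 1) \<and>
          loewner_le ((exp (-2 * \<nu>0' * \<bar>t\<bar>) * (\<rho>0 \<sigma> / c \<sigma>)) *\<^sub>R mat 1) (gram_N Y C t (t + \<sigma>)) \<and>
          loewner_le (gram_N Y C t (t + \<sigma>)) ((exp (2 * \<nu>1' * \<bar>t\<bar>) * (c \<sigma> * \<rho>1 \<sigma>)) *\<^sub>R mat 1)"
      proof (intro exI[of _ \<sigma>0] conjI allI impI s0)
        fix \<sigma> assume s: "\<sigma> \<ge> \<sigma>0"
        then have s': "\<sigma> \<ge> 0" using s0 by simp
        have cp: "c \<sigma> > 0" by (rule cpos[OF s'])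
        from H s have H1: "\<forall>x. exp (-2 * \<nu>0 * \<bar>t\<bar>) * \<theta>0 \<sigma> * (norm x)^2 \<le> x \<bullet> (gram_M X C t (t + \<sigma>) *v x)"
          and H2: "\<forall>x. x \<bullet> (gram_M X C t (t + \<sigma>) *v x) \<le> exp (2 * \<nu>1 * \<bar>t\<bar>) * \<theta>1 \<sigma> * (norm x)^2"
          and H3: "\<forall>x. exp (-2 * \<nu>0' * \<bar>t\<bar>) * \<rho>0 \<sigma> * (norm x)^2 \<le> x \<bullet> (gram_N X C t (t + \<sigma>) *v x)"
          and H4: "\<forall>x. x \<bullet> (gram_N X C t (t + \<sigma>) *v x) \<le> exp (2 * \<nu>1' * \<bar>t\<bar>) * \<rho>1 \<sigma> * (norm x)^2"
          unfolding loewner_lower loewner_upper by blast+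
        show "loewner_le ((exp (-2 * \<nu>0 * \<bar>t\<bar>) * (\<theta>0 \<sigma> / c \<sigma>)) *\<^sub>R mat 1) (gram_M Y C t (t + \<sigma>))"
          unfolding loewner_lower
          using transfer_lower[OF spec[OF H1] cM[OF s'] cp] by (simp add: mult_ac)
        show "loewner_le (gram_M Y C t (t + \<sigma>)) ((exp (2 * \<nu>1 * \<bar>t\<bar>) * (c \<sigma> * \<theta>1 \<sigma>)) *\<^sub>R mat 1)"
          unfolding loewner_upper
          using transfer_upper[OF spec[OF H2] cM'[OF s'] cp] by (simp add: mult_ac)
        show "loewner_le ((exp (-2 * \<nu>0' * \<bar>t\<bar>) * (\<rho>0 \<sigma> / c \<sigma>)) *\<^sub>R mat 1) (gram_N Y C t (t + \<sigma>))"
          unfolding loewner_lower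
          using transfer_lower[OF spec[OF H3] cN[OF s'] cp] by (simp add: mult_ac)
        show "loewner_le (gram_N Y C t (t + \<sigma>)) ((exp (2 * \<nu>1' * \<bar>t\<bar>) * (c \<sigma> * \<rho>1 \<sigma>)) *\<^sub>R mat 1)"
          unfolding loewner_upper
          using transfer_upper[OF spec[OF H4] cN'[OF s'] cp] by (simp add: mult_ac)
      qed
    qed
  qed
qed




theorem mainTheorem3:
  fixes A :: "real \<Rightarrow> real^'n^'n" and K :: "real \<Rightarrow> real^'m^'n" and C :: "real \<Rightarrow> real^'n^'m"
    and K0 a \<epsilon> \<K> \<C> \<delta> \<gamma> :: real
  assumes "continuous_on UNIV A" "continuous_on UNIV K" "continuous_on UNIV C"
    and "K0 > 0" "a > 0" "\<epsilon> > 0"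
    and "nonuniform_bounded_growth A K0 a \<epsilon>"
    and "\<K> > 0" "\<C> > 0" "\<delta> > 0" "\<gamma> \<ge> 0"
    and "\<forall>z. mnorm (K z) \<le> \<K> * exp (- \<delta> * \<bar>z\<bar>)"
    and "\<forall>z. mnorm (C z) \<le> \<C> * exp (\<gamma> * \<bar>z\<bar>)"
    and "\<delta> > \<gamma> + \<epsilon>"
  shows "NUCO A C \<longleftrightarrow> NUCO (\<lambda>t. A t - K t ** C t) C"
proof -
  note Ac = assms(1) and Kc = assms(2) and Cc = assms(3) and nubg = assms(7)
    and Kb = assms(12) and Cb = assms(13) and d = assms(14)
  define B where "B = (\<lambda>t. A t - K t ** C t)"
  have Bc: "continuous_on UNIV B" unfolding B_def
    by (intro continuous_intros bounded_bilinear.continuous_on[OF bb_mmult Kc Cc] Ac)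
  have Knc: "continuous_on UNIV (\<lambda>t. - K t)" by (intro continuous_intros Kc)
  have Knb: "\<forall>z. mnorm (- K z) \<le> \<K> * exp (- \<delta> * \<bar>z\<bar>)" using Kb by (simp add: mnorm_uminus)
  define a' where "a' = a + K0 * \<K> * \<C>"
  have a': "a' \<ge> 0" "a \<le> a'" using assms(4,5,8,9) by (auto simp: a'_def)
  have nubgB: "nonuniform_bounded_growth B K0 a' \<epsilon>"
    unfolding B_def a'_def
    by (rule nubg_perturb[OF Ac Kc Cc nubg _ Kb Cb assms(4) assms(8) assms(9) assms(11) d]) (use assms(5) in simp)
  have nubgA: "nonuniform_bounded_growth A K0 a' \<epsilon>"
    unfolding nonuniform_bounded_growth_def
  proof (intro allI)
    fix t \<tau> :: real
    have "mnorm (transition A t \<tau>) \<le> K0 * exp (\<epsilon> * \<bar>\<tau>\<bar>) * exp (a * \<bar>t - \<tau>\<bar>)"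
      using nubg by (simp add: nonuniform_bounded_growth_def)
    also have "\<dots> \<le> K0 * exp (\<epsilon> * \<bar>\<tau>\<bar>) * exp (a' * \<bar>t - \<tau>\<bar>)"
      using assms(4) a' by (intro mult_left_mono) (auto intro: mult_right_mono)
    finally show "mnorm (transition A t \<tau>) \<le> K0 * exp (\<epsilon> * \<bar>\<tau>\<bar>) * exp (a' * \<bar>t - \<tau>\<bar>)" .
  qed
  define L where "L \<sigma> = \<C> * K0 * \<K> * exp ((\<gamma> + a') * \<sigma>)" for \<sigma>
  define c where "c \<sigma> = 2 + 2 * (L \<sigma>)^2 * \<sigma>^2" for \<sigma>
  have L0: "L \<sigma> \<ge> 0" for \<sigma> using assms(4,8,9) by (simp add: L_def)
  have cpos: "c \<sigma> > 0" for \<sigma> unfolding c_def by (simp add: add_pos_nonneg)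
  have AB: "A = (\<lambda>t. B t - (- K t) ** C t)"
    by (simp add: B_def matrix_mul_uminus_left fun_eq_iff)
  have sr: "\<bar>s - r\<bar> \<le> \<sigma>" if "s \<in> {t..t+\<sigma>}" "r \<in> {t..t+\<sigma>}" for s r t \<sigma> :: real
    using that by auto
  have kernA: "norm (C s *v (transition A s r *v (K r *v v))) \<le> L \<sigma> * norm v"
    if "s \<in> {t..t+\<sigma>}" "r \<in> {t..t+\<sigma>}" for s r t \<sigma> and v :: "real^'m"
    using kernel_bound[OF nubgA a'(1) Kb Cb assms(4) assms(8) assms(9) assms(11) d sr[OF that]]
    by (simp add: L_def)
  have kernB: "norm (C s *v (transition B s r *v (- K r *v v))) \<le> L \<sigma> * norm v"
    if "s \<in> {t..t+\<sigma>}" "r \<in> {t..t+\<sigma>}" for s r t \<sigma> and v :: "real^'m"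
    using kernel_bound[OF nubgB a'(1) Knb Cb assms(4) assms(8) assms(9) assms(11) d sr[OF that]]
    by (simp add: L_def)
  have MAB: "x \<bullet> (gram_M A C t (t+\<sigma>) *v x) \<le> c \<sigma> * (x \<bullet> (gram_M B C t (t+\<sigma>) *v x))"
    if "\<sigma> \<ge> 0" for t \<sigma> x
    unfolding gram_M_quad[OF Ac Cc] gram_M_quad[OF Bc Cc]
    using core_cmp[OF Ac Kc Cc B_def, of t "t+\<sigma>" t "L \<sigma>", OF _ _ L0 kernA] that
    by (simp add: c_def)
  have MBA: "x \<bullet> (gram_M B C t (t+\<sigma>) *v x) \<le> c \<sigma> * (x \<bullet> (gram_M A C t (t+\<sigma>) *v x))"
    if "\<sigma> \<ge> 0" for t \<sigma> x
    unfolding gram_M_quad[OF Ac Cc] gram_M_quad[OF Bc Cc]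
    using core_cmp[OF Bc Knc Cc AB, of t "t+\<sigma>" t "L \<sigma>", OF _ _ L0 kernB] that
    by (simp add: c_def)
  have NAB: "x \<bullet> (gram_N A C t (t+\<sigma>) *v x) \<le> c \<sigma> * (x \<bullet> (gram_N B C t (t+\<sigma>) *v x))"
    if "\<sigma> \<ge> 0" for t \<sigma> x
    unfolding gram_N_quad[OF Ac Cc] gram_N_quad[OF Bc Cc]
    using core_cmp[OF Ac Kc Cc B_def, of t "t+\<sigma>" "t+\<sigma>" "L \<sigma>", OF _ _ L0 kernA] that
    by (simp add: c_def)
  have NBA: "x \<bullet> (gram_N B C t (t+\<sigma>) *v x) \<le> c \<sigma> * (x \<bullet> (gram_N A C t (t+\<sigma>) *v x))"
    if "\<sigma> \<ge> 0" for t \<sigma> x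
    unfolding gram_N_quad[OF Ac Cc] gram_N_quad[OF Bc Cc]
    using core_cmp[OF Bc Knc Cc AB, of t "t+\<sigma>" "t+\<sigma>" "L \<sigma>", OF _ _ L0 kernB] that
    by (simp add: c_def)
  have "NUCO A C \<longleftrightarrow> NUCO B C"
  proof
    assume "NUCO A C"
    then show "NUCO B C" using nuco_transfer[where c=c and X=A and Y=B and C=C, OF _ MAB MBA NAB NBA] cpos by blast
  next
    assume "NUCO B C"
    then show "NUCO A C" using nuco_transfer[where c=c and X=B and Y=A and C=C, OF _ MBA MAB NBA NAB] cpos by blast
  qed
  then show ?thesis by (simp add: B_def)
qed



end
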